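(* Let $N\ge1$, $c\in\mathbb{R}$, and consider the manifold of Jacobi parameters $a_1,\dots,a_{N-1}>0$, $b_1,\dots,b_N\in\mathbb{R}$ with $\sum_jb_j=c$, with the Poisson bracket described in the context. For $1\le n\le N$ let $P_n,Q_n$ be as in the context and $m_n(x)=-Q_n(x)/P_n(x)$. Then (wherever $P_n(y)\neq0$) \[ \{P_n(x),m_n(y)\}=\tfrac12\Bigl[Q_n(x)m_n(y)-\frac{P_n(x)m_n(y)+Q_n(x)}{x-y}\Bigr], \] \[ \{Q_n(x),m_n(y)\}=\tfrac12\Bigl[-Q_n(x)m_n(y)^2+m_n(y)\frac{P_n(x)m_n(y)+Q_n(x)}{x-y}\Bigr]. \]
   Context: The Poisson bracket is the bilinear antisymmetric bracket satisfying the Leibniz rule whose only nonzero brackets among the coordinates are $\{b_k,a_k\}=-\tfrac14 a_k$ ($k=1,\dots,N-1$) and $\{b_k,a_{k-1}\}=\tfrac14 a_{k-1}$ ($k=2,\dots,N$); auxiliary variables $x,y$ are held fixed. With $J(b_1,\dots,b_m;a_1,\dots,a_{m-1})$ the $m\times m$ tridiagonal symmetric matrix with diagonal $b_1,\dots,b_m$ and off-diagonal entries $a_1,\dots,a_{m-1}$: $P_n(x)=\det(x-J(b_1,\dots,b_n;a_1,\dots,a_{n-1}))$ and $Q_n(x)=\det(x-J(b_2,\dots,b_n;a_2,\dots,a_{n-1}))$. *)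

theory Defs
  imports Complex_Main "HOL-Analysis.Derivative" "Jordan_Normal_Form.Determinant"
begin

text \<open>Points of phase space: a :: nat => real (a 1 .. a (N-1)) and b :: nat => real (b 1 .. b N).
  Observables are functions F a b.\<close>

definition jacobi_mat :: "(nat \<Rightarrow> real) \<Rightarrow> (nat \<Rightarrow> real) \<Rightarrow> nat \<Rightarrow> nat \<Rightarrow> real mat" where
  "jacobi_mat a b s n = mat (Suc n - s) (Suc n - s) (\<lambda>(i,j).
      if i = j then b (s + i)
      else if j = i + 1 then a (s + i)
      else if i = j + 1 then a (s + j)
      else 0)"

definition charpoly_at :: "(nat \<Rightarrow> real) \<Rightarrow> (nat \<Rightarrow> real) \<Rightarrow> nat \<Rightarrow> nat \<Rightarrow> real \<Rightarrow> real" where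
  "charpoly_at a b s n x =
     det (x \<cdot>\<^sub>m 1\<^sub>m (Suc n - s) - jacobi_mat a b s n)"

definition Pn :: "nat \<Rightarrow> (nat \<Rightarrow> real) \<Rightarrow> (nat \<Rightarrow> real) \<Rightarrow> real \<Rightarrow> real" where
  "Pn n a b x = charpoly_at a b 1 n x"

definition Qn :: "nat \<Rightarrow> (nat \<Rightarrow> real) \<Rightarrow> (nat \<Rightarrow> real) \<Rightarrow> real \<Rightarrow> real" where
  "Qn n a b x = charpoly_at a b 2 n x"

definition mn :: "nat \<Rightarrow> (nat \<Rightarrow> real) \<Rightarrow> (nat \<Rightarrow> real) \<Rightarrow> real \<Rightarrow> real" where
  "mn n a b y = - Qn n a b y / Pn n a b y"

definition da :: "((nat \<Rightarrow> real) \<Rightarrow> (nat \<Rightarrow> real) \<Rightarrow> real) \<Rightarrow> nat \<Rightarrow> (nat \<Rightarrow> real) \<Rightarrow> (nat \<Rightarrow> real) \<Rightarrow> real" where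
  "da F k a b = deriv (\<lambda>t. F (a(k := t)) b) (a k)"

definition db :: "((nat \<Rightarrow> real) \<Rightarrow> (nat \<Rightarrow> real) \<Rightarrow> real) \<Rightarrow> nat \<Rightarrow> (nat \<Rightarrow> real) \<Rightarrow> (nat \<Rightarrow> real) \<Rightarrow> real" where
  "db F k a b = deriv (\<lambda>t. F a (b(k := t))) (b k)"

text \<open>The Poisson bracket: the unique bilinear antisymmetric Leibniz bracket with
  {b_k,a_k} = -a_k/4 (k=1..N-1), {b_k,a_(k-1)} = a_(k-1)/4 (k=2..N), others zero,
  written via partial derivatives: {F,G} = sum_{u,v} dF/du dG/dv {u,v}.\<close>
definition poisson :: "nat \<Rightarrow> ((nat \<Rightarrow> real) \<Rightarrow> (nat \<Rightarrow> real) \<Rightarrow> real) \<Rightarrow>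
    ((nat \<Rightarrow> real) \<Rightarrow> (nat \<Rightarrow> real) \<Rightarrow> real) \<Rightarrow> (nat \<Rightarrow> real) \<Rightarrow> (nat \<Rightarrow> real) \<Rightarrow> real" where
  "poisson N F G a b =
     (\<Sum>k=1..N-1. (- a k / 4) * (db F k a b * da G k a b - da F k a b * db G k a b))
   + (\<Sum>k=2..N. (a (k-1) / 4) * (db F k a b * da G (k-1) a b - da F (k-1) a b * db G k a b))"

end

theory Submission
  imports Defs
begin

definition CM :: "(nat \<Rightarrow> real) \<Rightarrow> (nat \<Rightarrow> real) \<Rightarrow> nat \<Rightarrow> nat \<Rightarrow> real \<Rightarrow> real mat" where
  "CM a b s m x = mat m m (\<lambda>(i,j).
      if i = j then x - b (s + i)
      else if j = i + 1 then - a (s + i)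
      else if i = j + 1 then - a (s + j)
      else 0)"

lemma charpoly_CM: "charpoly_at a b s n x = det (CM a b s (Suc n - s) x)"
  unfolding charpoly_at_def jacobi_mat_def CM_def
  by (rule arg_cong[where f=det], rule eq_matI, auto)

lemma CM_carrier: "CM a b s m x \<in> carrier_mat m m"
  unfolding CM_def by auto

lemma CM_delete00: "mat_delete (CM a b s (Suc m) x) 0 0 = CM a b (Suc s) m x"
  unfolding CM_def mat_delete_def by (rule eq_matI, auto)

lemma CM_delete01_00: "mat_delete (mat_delete (CM a b s (Suc (Suc m)) x) 0 (Suc 0)) 0 0 = CM a b (Suc (Suc s)) m x"
  unfolding CM_def mat_delete_def by (rule eq_matI, auto)

lemma det_CM_rec: "det (CM a b s (Suc (Suc m)) x) =
   (x - b s) * det (CM a b (Suc s) (Suc m) x) - a s * a s * det (CM a b (Suc (Suc s)) m x)"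
proof -
  let ?M = "CM a b s (Suc (Suc m)) x"
  have "det ?M = (\<Sum>j<Suc (Suc m). ?M $$ (0,j) * cofactor ?M 0 j)"
    by (rule laplace_expansion_row[OF CM_carrier], simp)
  also have "\<dots> = (\<Sum>j\<in>{0,1}. ?M $$ (0,j) * cofactor ?M 0 j)"
    by (rule sum.mono_neutral_right, auto simp: CM_def)
  also have "\<dots> = (x - b s) * det (CM a b (Suc s) (Suc m) x) + a s * det (mat_delete ?M 0 (Suc 0))"
    by (simp add: cofactor_def CM_delete00[of a b s "Suc m" x, simplified]) (simp add: CM_def)
  also have "det (mat_delete ?M 0 (Suc 0)) = - a s * det (CM a b (Suc (Suc s)) m x)"
  proof -
    let ?D = "mat_delete ?M 0 (Suc 0)"
    have Dc: "?D \<in> carrier_mat (Suc m) (Suc m)"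
      using mat_delete_carrier[OF CM_carrier[of a b s "Suc (Suc m)" x]] by simp
    have "det ?D = (\<Sum>i<Suc m. ?D $$ (i,0) * cofactor ?D i 0)"
      by (rule laplace_expansion_column[OF Dc], simp)
    also have "\<dots> = (\<Sum>i\<in>{0}. ?D $$ (i,0) * cofactor ?D i 0)"
      by (rule sum.mono_neutral_right, auto simp: CM_def mat_delete_def)
    also have "\<dots> = - a s * det (CM a b (Suc (Suc s)) m x)"
    proof -
      have e: "mat_delete ?D 0 0 = CM a b (Suc (Suc s)) m x" by (rule CM_delete01_00)
      have e2: "?D $$ (0,0) = - a s" by (simp add: CM_def mat_delete_def)
      show ?thesis using e e2 by (simp add: cofactor_def)
    qed
    finally show ?thesis .
  qed
  finally show ?thesis by simp
qed

lemma cp_gt: "n < s \<Longrightarrow> charpoly_at a b s n x = 1"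
  unfolding charpoly_CM by (rule det_dim_zero) (simp add: CM_def)

lemma cp_eq: "charpoly_at a b n n x = x - b n"
  unfolding charpoly_CM by (subst det_single) (auto simp: CM_def)

lemma cp_rec: assumes "s < n"
  shows "charpoly_at a b s n x = (x - b s) * charpoly_at a b (Suc s) n x - a s * a s * charpoly_at a b (Suc (Suc s)) n x"
proof -
  obtain m where m: "Suc n - s = Suc (Suc m)" using assms by (metis Suc_diff_Suc Suc_diff_le less_imp_le_nat Suc_leI)
  have m1: "Suc n - Suc s = Suc m" "Suc n - Suc (Suc s) = m" using m by auto
  show ?thesis unfolding charpoly_CM m m1 by (rule det_CM_rec)
qed

lemma cp_indep: assumes "\<And>j. s \<le> j \<Longrightarrow> a j = a' j \<and> b j = b' j"
  shows "charpoly_at a b s n x = charpoly_at a' b' s n x"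
proof -
  have "CM a b s m x = CM a' b' s m x" for m
    unfolding CM_def using assms by (intro arg_cong[where f="mat m m"]) (auto simp: fun_eq_iff)
  thus ?thesis unfolding charpoly_CM by simp
qed

type_synonym obs = "(nat \<Rightarrow> real) \<Rightarrow> (nat \<Rightarrow> real) \<Rightarrow> real"

definition smA :: "obs \<Rightarrow> bool" where
  "smA F \<longleftrightarrow> (\<forall>k a b. \<exists>D. ((\<lambda>t. F (a(k:=t)) b) has_real_derivative D) (at (a k)))"
definition smB :: "obs \<Rightarrow> bool" where
  "smB F \<longleftrightarrow> (\<forall>k a b. \<exists>D. ((\<lambda>t. F a (b(k:=t))) has_real_derivative D) (at (b k)))"

lemma smA_D: assumes "smA F" shows "((\<lambda>t. F (a(k:=t)) b) has_real_derivative da F k a b) (at (a k))"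
proof -
  obtain D where D: "((\<lambda>t. F (a(k:=t)) b) has_real_derivative D) (at (a k))" using assms unfolding smA_def by blast
  have "da F k a b = D" unfolding da_def by (rule DERIV_imp_deriv[OF D])
  then show ?thesis using D by simp
qed
lemma smB_D: assumes "smB F" shows "((\<lambda>t. F a (b(k:=t))) has_real_derivative db F k a b) (at (b k))"
proof -
  obtain D where D: "((\<lambda>t. F a (b(k:=t))) has_real_derivative D) (at (b k))" using assms unfolding smB_def by blast
  have "db F k a b = D" unfolding db_def by (rule DERIV_imp_deriv[OF D])
  then show ?thesis using D by simp
qed

lemma da_I: "((\<lambda>t. F (a(k:=t)) b) has_real_derivative D) (at (a k)) \<Longrightarrow> da F k a b = D"
  unfolding da_def by (rule DERIV_imp_deriv)
lemma db_I: "((\<lambda>t. F a (b(k:=t))) has_real_derivative D) (at (b k)) \<Longrightarrow> db F k a b = D"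
  unfolding db_def by (rule DERIV_imp_deriv)

lemma dA_const: "((\<lambda>t. c) has_real_derivative 0) (at z)" by simp

lemma dA_coord: "((\<lambda>t. (a(k:=t)) j) has_real_derivative (if k = j then 1 else 0)) (at z)"
  by (cases "k = j") auto

lemma smA_const[simp]: "smA (\<lambda>a b. c)" unfolding smA_def using dA_const by blast
lemma smB_const[simp]: "smB (\<lambda>a b. c)" unfolding smB_def using dA_const by blast
lemma smA_a[simp]: "smA (\<lambda>a b. a j)" unfolding smA_def by (intro allI exI, rule dA_coord)
lemma smB_a[simp]: "smB (\<lambda>a b. a j)" unfolding smB_def using dA_const by blast
lemma smA_b[simp]: "smA (\<lambda>a b. b j)" unfolding smA_def using dA_const by blast
lemma smB_b[simp]: "smB (\<lambda>a b. b j)" unfolding smB_def by (intro allI exI, rule dA_coord)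

lemma da_const[simp]: "da (\<lambda>a b. c) k a b = 0" by (rule da_I) simp
lemma db_const[simp]: "db (\<lambda>a b. c) k a b = 0" by (rule db_I) simp
lemma da_a[simp]: "da (\<lambda>a b. a j) k a b = (if k = j then 1 else 0)" by (rule da_I, rule dA_coord)
lemma db_b[simp]: "db (\<lambda>a b. b j) k a b = (if k = j then 1 else 0)" by (rule db_I, rule dA_coord)
lemma da_b[simp]: "da (\<lambda>a b. b j) k a b = 0" by (rule da_I) simp
lemma db_a[simp]: "db (\<lambda>a b. a j) k a b = 0" by (rule db_I) simp

lemma smA_mult[simp]: assumes "smA F" "smA G" shows "smA (\<lambda>a b. F a b * G a b)"
  unfolding smA_def
proof (intro allI)
  fix k a b
  show "\<exists>D. ((\<lambda>t. F (a(k:=t)) b * G (a(k:=t)) b) has_real_derivative D) (at (a k))"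
    using DERIV_mult[OF smA_D[OF assms(1), of a k b] smA_D[OF assms(2), of a k b]] by blast
qed
lemma smB_mult[simp]: assumes "smB F" "smB G" shows "smB (\<lambda>a b. F a b * G a b)"
  unfolding smB_def
proof (intro allI)
  fix k a b
  show "\<exists>D. ((\<lambda>t. F a (b(k:=t)) * G a (b(k:=t))) has_real_derivative D) (at (b k))"
    using DERIV_mult[OF smB_D[OF assms(1), of a b k] smB_D[OF assms(2), of a b k]] by blast
qed
lemma smA_diff[simp]: assumes "smA F" "smA G" shows "smA (\<lambda>a b. F a b - G a b)"
  unfolding smA_def
proof (intro allI)
  fix k a b
  show "\<exists>D. ((\<lambda>t. F (a(k:=t)) b - G (a(k:=t)) b) has_real_derivative D) (at (a k))"
    using DERIV_diff[OF smA_D[OF assms(1), of a k b] smA_D[OF assms(2), of a k b]] by blast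
qed
lemma smB_diff[simp]: assumes "smB F" "smB G" shows "smB (\<lambda>a b. F a b - G a b)"
  unfolding smB_def
proof (intro allI)
  fix k a b
  show "\<exists>D. ((\<lambda>t. F a (b(k:=t)) - G a (b(k:=t))) has_real_derivative D) (at (b k))"
    using DERIV_diff[OF smB_D[OF assms(1), of a b k] smB_D[OF assms(2), of a b k]] by blast
qed

lemma da_mult[simp]: assumes "smA F" "smA G"
  shows "da (\<lambda>a b. F a b * G a b) k a b = da F k a b * G a b + da G k a b * F a b"
proof (rule da_I)
  show "((\<lambda>t. F (a(k:=t)) b * G (a(k:=t)) b) has_real_derivative da F k a b * G a b + da G k a b * F a b) (at (a k))"
    using DERIV_mult[OF smA_D[OF assms(1), of a k b] smA_D[OF assms(2), of a k b]] by simp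
qed
lemma db_mult[simp]: assumes "smB F" "smB G"
  shows "db (\<lambda>a b. F a b * G a b) k a b = db F k a b * G a b + db G k a b * F a b"
proof (rule db_I)
  show "((\<lambda>t. F a (b(k:=t)) * G a (b(k:=t))) has_real_derivative db F k a b * G a b + db G k a b * F a b) (at (b k))"
    using DERIV_mult[OF smB_D[OF assms(1), of a b k] smB_D[OF assms(2), of a b k]] by simp
qed
lemma da_diff[simp]: assumes "smA F" "smA G"
  shows "da (\<lambda>a b. F a b - G a b) k a b = da F k a b - da G k a b"
  by (rule da_I) (rule DERIV_diff[OF smA_D[OF assms(1)] smA_D[OF assms(2)]])
lemma db_diff[simp]: assumes "smB F" "smB G"
  shows "db (\<lambda>a b. F a b - G a b) k a b = db F k a b - db G k a b"
  by (rule db_I) (rule DERIV_diff[OF smB_D[OF assms(1)] smB_D[OF assms(2)]])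

lemma sum_lin4:
  assumes e: "\<And>k. f k = c1 * f1 k + c2 * f2 k + c3 * f3 k + c4 * (f4 k :: real)"
  shows "sum f A = c1 * sum f1 A + c2 * sum f2 A + c3 * sum f3 A + c4 * sum f4 A"
proof -
  have "sum f A = (\<Sum>k\<in>A. c1 * f1 k + c2 * f2 k + c3 * f3 k + c4 * f4 k)"
    by (rule sum.cong[OF refl], rule e)
  also have "\<dots> = c1 * sum f1 A + c2 * sum f2 A + c3 * sum f3 A + c4 * sum f4 A"
    by (simp add: sum.distrib sum_distrib_left)
  finally show ?thesis .
qed

lemma poisson_lin1:
  assumes "\<And>k. da F k a b = c1 * da F1 k a b + c2 * da F2 k a b + c3 * da F3 k a b + c4 * da F4 k a b"
      and "\<And>k. db F k a b = c1 * db F1 k a b + c2 * db F2 k a b + c3 * db F3 k a b + c4 * db F4 k a b"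
  shows "poisson N F G a b = c1 * poisson N F1 G a b + c2 * poisson N F2 G a b + c3 * poisson N F3 G a b + c4 * poisson N F4 G a b"
proof -
  define T1 where "T1 = (\<lambda>H k. (- a k / 4) * (db H k a b * da G k a b - da H k a b * db G k a b))"
  define T2 where "T2 = (\<lambda>H k. (a (k-1) / 4) * (db H k a b * da G (k-1) a b - da H (k-1) a b * db G k a b))"
  have P: "\<And>H. poisson N H G a b = sum (T1 H) {1..N-1} + sum (T2 H) {2..N}"
    unfolding poisson_def T1_def T2_def by simp
  have e1: "\<And>k. T1 F k = c1 * T1 F1 k + c2 * T1 F2 k + c3 * T1 F3 k + c4 * T1 F4 k"
    unfolding T1_def assms by (simp add: algebra_simps)
  have e2: "\<And>k. T2 F k = c1 * T2 F1 k + c2 * T2 F2 k + c3 * T2 F3 k + c4 * T2 F4 k"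
    unfolding T2_def assms by (simp add: algebra_simps)
  show ?thesis unfolding P sum_lin4[OF e1] sum_lin4[OF e2] by (simp add: algebra_simps)
qed

lemma poisson_lin2:
  assumes "\<And>k. da G k a b = c1 * da G1 k a b + c2 * da G2 k a b + c3 * da G3 k a b + c4 * da G4 k a b"
      and "\<And>k. db G k a b = c1 * db G1 k a b + c2 * db G2 k a b + c3 * db G3 k a b + c4 * db G4 k a b"
  shows "poisson N F G a b = c1 * poisson N F G1 a b + c2 * poisson N F G2 a b + c3 * poisson N F G3 a b + c4 * poisson N F G4 a b"
proof -
  define T1 where "T1 = (\<lambda>H k. (- a k / 4) * (db F k a b * da H k a b - da F k a b * db H k a b))"
  define T2 where "T2 = (\<lambda>H k. (a (k-1) / 4) * (db F k a b * da H (k-1) a b - da F (k-1) a b * db H k a b))"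
  have P: "\<And>H. poisson N F H a b = sum (T1 H) {1..N-1} + sum (T2 H) {2..N}"
    unfolding poisson_def T1_def T2_def by simp
  have e1: "\<And>k. T1 G k = c1 * T1 G1 k + c2 * T1 G2 k + c3 * T1 G3 k + c4 * T1 G4 k"
    unfolding T1_def assms by (simp add: algebra_simps)
  have e2: "\<And>k. T2 G k = c1 * T2 G1 k + c2 * T2 G2 k + c3 * T2 G3 k + c4 * T2 G4 k"
    unfolding T2_def assms by (simp add: algebra_simps)
  show ?thesis unfolding P sum_lin4[OF e1] sum_lin4[OF e2] by (simp add: algebra_simps)
qed

lemma poisson_antisym: "poisson N F G a b = - poisson N G F a b"
  unfolding poisson_def by (simp add: algebra_simps sum.distrib[symmetric] sum_negf[symmetric])

lemma poisson_self: "poisson N F F a b = 0"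
  using poisson_antisym[of N F F a b] by simp

lemma poisson_noA: "(\<And>k. da F k a b = 0) \<Longrightarrow> (\<And>k. da G k a b = 0) \<Longrightarrow> poisson N F G a b = 0"
  unfolding poisson_def by simp

lemma poisson_const2: "(\<And>k. da G k a b = 0) \<Longrightarrow> (\<And>k. db G k a b = 0) \<Longrightarrow> poisson N F G a b = 0"
  unfolding poisson_def by simp

definition Cp :: "nat \<Rightarrow> nat \<Rightarrow> real \<Rightarrow> obs" where
  "Cp n s x = (\<lambda>a b. charpoly_at a b s n x)"

lemma Cp_rec_fun: "s < n \<Longrightarrow> Cp n s x = (\<lambda>a b. (x - b s) * Cp n (Suc s) x a b - a s * a s * Cp n (Suc (Suc s)) x a b)"
  by (simp add: Cp_def cp_rec fun_eq_iff)
lemma Cp_n_fun: "Cp n n x = (\<lambda>a b. x - b n)"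
  by (simp add: Cp_def cp_eq fun_eq_iff)
lemma Cp_gt_fun: "n < s \<Longrightarrow> Cp n s x = (\<lambda>a b. 1)"
  by (simp add: Cp_def cp_gt fun_eq_iff)

lemma sm_Cp: "smA (Cp n s x) \<and> smB (Cp n s x)"
proof (induction "n - s" arbitrary: s rule: less_induct)
  case less
  consider "n < s" | "s = n" | "s < n" by linarith
  then show ?case
  proof cases
    case 1 then show ?thesis by (simp add: Cp_gt_fun)
  next
    case 2 then show ?thesis by (simp add: Cp_n_fun)
  next
    case 3
    have h1: "smA (Cp n (Suc s) x) \<and> smB (Cp n (Suc s) x)" using less 3 by simp
    have h2: "smA (Cp n (Suc (Suc s)) x) \<and> smB (Cp n (Suc (Suc s)) x)" using less 3 by simp
    show ?thesis using h1 h2 by (simp add: Cp_rec_fun[OF 3])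
  qed
qed

lemma Cp_low: assumes "k < s" shows "da (Cp n s x) k a b = 0" "db (Cp n s x) k a b = 0"
proof -
  have "(\<lambda>t. Cp n s x (a(k:=t)) b) = (\<lambda>t. Cp n s x a b)"
    unfolding Cp_def fun_eq_iff using assms by (auto intro: cp_indep)
  then show "da (Cp n s x) k a b = 0" by (metis da_I dA_const)
  have "(\<lambda>t. Cp n s x a (b(k:=t))) = (\<lambda>t. Cp n s x a b)"
    unfolding Cp_def fun_eq_iff using assms by (auto intro: cp_indep)
  then show "db (Cp n s x) k a b = 0" by (metis db_I dA_const)
qed

lemma Cp_da_rec: assumes "s < n"
  shows "da (Cp n s x) k a b = (x - b s) * da (Cp n (Suc s) x) k a b
     + (- Cp n (Suc s) x a b) * da (\<lambda>a b. b s) k a b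
     + (- 2 * a s * Cp n (Suc (Suc s)) x a b) * da (\<lambda>a b. a s) k a b
     + (-(a s * a s)) * da (Cp n (Suc (Suc s)) x) k a b"
  by (subst Cp_rec_fun[OF assms]) (simp add: sm_Cp; auto simp: algebra_simps)

lemma Cp_db_rec: assumes "s < n"
  shows "db (Cp n s x) k a b = (x - b s) * db (Cp n (Suc s) x) k a b
     + (- Cp n (Suc s) x a b) * db (\<lambda>a b. b s) k a b
     + (- 2 * a s * Cp n (Suc (Suc s)) x a b) * db (\<lambda>a b. a s) k a b
     + (-(a s * a s)) * db (Cp n (Suc (Suc s)) x) k a b"
  by (subst Cp_rec_fun[OF assms]) (simp add: sm_Cp; auto simp: algebra_simps)

lemma Cp_n_da: "da (Cp n n x) k a b = 0" by (simp add: Cp_n_fun)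
lemma Cp_n_db: "db (Cp n n x) k a b = - (if k = n then 1 else 0)" by (simp add: Cp_n_fun)
lemma Cp_gt_da: "n < s \<Longrightarrow> da (Cp n s x) k a b = 0" by (simp add: Cp_gt_fun)
lemma Cp_gt_db: "n < s \<Longrightarrow> db (Cp n s x) k a b = 0" by (simp add: Cp_gt_fun)

lemma Cp_db_top: assumes "s \<le> n" shows "db (Cp n s x) s a b = - Cp n (Suc s) x a b"
proof (cases "s = n")
  case True then show ?thesis by (simp add: Cp_n_db Cp_gt_fun)
next
  case False
  then have "s < n" using assms by simp
  then show ?thesis by (simp add: Cp_db_rec Cp_low)
qed

lemma pb_b_zero: assumes "\<And>k. k \<le> j \<Longrightarrow> da G k a b = 0"
  shows "poisson N (\<lambda>a b. b j) G a b = 0"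
proof -
  have s1: "(\<Sum>k=1..N-1. (- a k / 4) * (db (\<lambda>a b. b j) k a b * da G k a b - da (\<lambda>a b. b j) k a b * db G k a b)) = 0"
    by (rule sum.neutral) (auto simp: assms)
  have s2: "(\<Sum>k=2..N. (a (k-1) / 4) * (db (\<lambda>a b. b j) k a b * da G (k-1) a b - da (\<lambda>a b. b j) (k-1) a b * db G k a b)) = 0"
    by (rule sum.neutral) (auto simp: assms)
  show ?thesis unfolding poisson_def s1 s2 by simp
qed

lemma pb_a: assumes "\<And>k. k \<le> j \<Longrightarrow> db G k a b = 0" "1 \<le> j" "Suc j \<le> N"
  shows "poisson N (\<lambda>a b. a j) G a b = - a j / 4 * db G (Suc j) a b"
proof -
  have s1: "(\<Sum>k=1..N-1. (- a k / 4) * (db (\<lambda>a b. a j) k a b * da G k a b - da (\<lambda>a b. a j) k a b * db G k a b)) = 0"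
    by (rule sum.neutral) (auto simp: assms)
  have s2: "(\<Sum>k=2..N. (a (k-1) / 4) * (db (\<lambda>a b. a j) k a b * da G (k-1) a b - da (\<lambda>a b. a j) (k-1) a b * db G k a b))
     = (\<Sum>k=2..N. if k = Suc j then - a j / 4 * db G (Suc j) a b else 0)"
    by (rule sum.cong) auto
  have s3: "(\<Sum>k=2..N. if k = Suc j then - a j / 4 * db G (Suc j) a b else 0) = - a j / 4 * db G (Suc j) a b"
    using assms by (subst sum.delta) auto
  show ?thesis unfolding poisson_def s1 s2 s3 by simp
qed

lemma pb_ba: assumes "1 \<le> j" "Suc j \<le> N"
  shows "poisson N (\<lambda>a b. b j) (\<lambda>a b. a j) a b = - a j / 4"
proof -
  have s1: "(\<Sum>k=1..N-1. (- a k / 4) * (db (\<lambda>a b. b j) k a b * da (\<lambda>a b. a j) k a b - da (\<lambda>a b. b j) k a b * db (\<lambda>a b. a j) k a b))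
     = (\<Sum>k=1..N-1. if k = j then - a j / 4 else 0)"
    by (rule sum.cong) auto
  have s1': "(\<Sum>k=1..N-1. if k = j then - a j / 4 else 0) = - a j / 4"
    using assms by (subst sum.delta) auto
  have s2: "(\<Sum>k=2..N. (a (k-1) / 4) * (db (\<lambda>a b. b j) k a b * da (\<lambda>a b. a j) (k-1) a b - da (\<lambda>a b. b j) (k-1) a b * db (\<lambda>a b. a j) k a b)) = 0"
    by (rule sum.neutral) auto
  show ?thesis unfolding poisson_def s1 s1' s2 by simp
qed

lemma Cp_val: "s < n \<Longrightarrow> Cp n s x a b = (x - b s) * Cp n (Suc s) x a b - a s * a s * Cp n (Suc (Suc s)) x a b"
  by (simp add: Cp_rec_fun)

lemma alg1: fixes Px Py Qx Qy x y Z1 Z2 :: real assumes "Py \<noteq> 0" "x \<noteq> y"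
  shows "(-1 / Py) * (1/2 * (Qx * Qy + (Qx * Py - Px * Qy) / (x - y))) + (Qy / Py^2) * 0 + 0 * Z1 + 0 * Z2
    = 1/2 * (Qx * (- Qy / Py) - (Px * (- Qy / Py) + Qx) / (x - y))"
proof -
  have xy: "x - y \<noteq> 0" using assms by simp
  show ?thesis using assms(1) xy by (simp add: field_simps)
qed
lemma alg2: fixes Px Py Qx Qy x y Z1 Z2 :: real assumes "Py \<noteq> 0" "x \<noteq> y"
  shows "(-1 / Py) * 0 + (Qy / Py^2) * (- (1/2 * (Qy * Qx + (Qy * Px - Py * Qx) / (y - x)))) + 0 * Z1 + 0 * Z2
    = 1/2 * (- Qx * (- Qy / Py)^2 + (- Qy / Py) * (Px * (- Qy / Py) + Qx) / (x - y))"
proof -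
  have xy: "x - y \<noteq> 0" "y - x \<noteq> 0" using assms by auto
  show ?thesis using assms(1) xy by (simp add: field_simps power2_eq_square)
qed
lemma alg3: fixes P Q dP dQ Z W :: real assumes "P \<noteq> 0"
  shows "((- dQ) * P - (- Q) * dP) / (P * P) = (-1 / P) * dQ + (Q / P^2) * dP + 0 * Z + 0 * W"
  using assms by (simp add: field_simps power2_eq_square)
lemma alg_c1: fixes x y bs as Px Py Qx Qy :: real assumes "x \<noteq> y"
  shows "(x - bs) * ((y - bs) * 0 + (- Py) * 0 + (- 2 * as * Qy) * (- (as / 4 * Qx))
            + (-(as * as)) * (1/2 * (Qx * Qy + (Qx * Py - Px * Qy) / (x - y))))
       + (- Px) * ((y - bs) * 0 + (- Py) * 0 + (- 2 * as * Qy) * (- as / 4) + (-(as * as)) * 0)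
       + (- 2 * as * Qx) * ((y - bs) * (as / 4 * Qy) + (- Py) * (as / 4) + (- 2 * as * Qy) * 0 + (-(as * as)) * 0)
       + (-(as * as)) * ((y - bs) * (- (1/2 * (Qy * Qx + (Qy * Px - Py * Qx) / (y - x))))
            + (- Py) * 0 + (- 2 * as * Qy) * 0 + (-(as * as)) * 0) = 0"
proof -
  have xy: "x - y \<noteq> 0" "y - x \<noteq> 0" using assms by auto
  show ?thesis using xy by (simp add: field_simps)
qed
lemma alg_c3: fixes x y bs as Px Py Qx Qy :: real assumes "x \<noteq> y"
  shows "(x - bs) * 0 + (- Px) * 0 + (- 2 * as * Qx) * (as / 4 * Qy)
          + (-(as * as)) * (- (1/2 * (Qy * Qx + (Qy * Px - Py * Qx) / (y - x))))
     = 1/2 * (Px * Py + (Px * ((y - bs) * Py - as * as * Qy) - ((x - bs) * Px - as * as * Qx) * Py) / (x - y))"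
proof -
  have xy: "x - y \<noteq> 0" "y - x \<noteq> 0" using assms by auto
  show ?thesis using xy by (simp add: field_simps)
qed

lemma inv_all: assumes "1 \<le> s" "s \<le> n" "n \<le> N"
  shows "poisson N (Cp n s x) (Cp n s y) a b = 0 \<and>
         poisson N (Cp n (Suc s) x) (Cp n (Suc s) y) a b = 0 \<and>
         (x \<noteq> y \<longrightarrow> poisson N (Cp n s x) (Cp n (Suc s) y) a b =
            1/2 * (Cp n (Suc s) x a b * Cp n (Suc s) y a b
              + (Cp n (Suc s) x a b * Cp n s y a b - Cp n s x a b * Cp n (Suc s) y a b) / (x - y)))"
  using assms
proof (induction "n - s" arbitrary: s x y rule: less_induct)
  case less
  show ?case
  proof (cases "s = n")
    case True
    have c1: "poisson N (Cp n s x) (Cp n s y) a b = 0"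
      unfolding True by (rule poisson_noA) (simp_all add: Cp_n_da)
    have c2: "poisson N (Cp n (Suc s) x) (Cp n (Suc s) y) a b = 0"
      unfolding True by (rule poisson_const2) (simp_all add: Cp_gt_da Cp_gt_db)
    have c3: "poisson N (Cp n s x) (Cp n (Suc s) y) a b = 0"
      unfolding True by (rule poisson_const2) (simp_all add: Cp_gt_da Cp_gt_db)
    have c3': "x \<noteq> y \<Longrightarrow> 1/2 * (Cp n (Suc s) x a b * Cp n (Suc s) y a b
              + (Cp n (Suc s) x a b * Cp n s y a b - Cp n s x a b * Cp n (Suc s) y a b) / (x - y)) = 0"
      unfolding True by (simp add: Cp_gt_fun Cp_n_fun field_simps)
    show ?thesis using c1 c2 c3 c3' by simp
  next
    case False
    then have sn: "s < n" using less.prems by simp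
    have IH: "\<And>x y. poisson N (Cp n (Suc s) x) (Cp n (Suc s) y) a b = 0 \<and>
         poisson N (Cp n (Suc (Suc s)) x) (Cp n (Suc (Suc s)) y) a b = 0 \<and>
         (x \<noteq> y \<longrightarrow> poisson N (Cp n (Suc s) x) (Cp n (Suc (Suc s)) y) a b =
            1/2 * (Cp n (Suc (Suc s)) x a b * Cp n (Suc (Suc s)) y a b
              + (Cp n (Suc (Suc s)) x a b * Cp n (Suc s) y a b - Cp n (Suc s) x a b * Cp n (Suc (Suc s)) y a b) / (x - y)))"
      using less.hyps[of "Suc s"] less.prems sn by simp
    define P where "P = (\<lambda>x. Cp n (Suc s) x)"
    define Q where "Q = (\<lambda>x. Cp n (Suc (Suc s)) x)"
    define B where "B = (\<lambda>(a::nat\<Rightarrow>real) (b::nat\<Rightarrow>real). b s)"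
    define A where "A = (\<lambda>(a::nat\<Rightarrow>real) (b::nat\<Rightarrow>real). a s)"
    have sN: "Suc s \<le> N" "1 \<le> s" using sn less.prems by auto
    have B1: "\<And>x y. poisson N (P x) (P y) a b = 0" using IH unfolding P_def by blast
    have B2: "\<And>x y. poisson N (Q x) (Q y) a b = 0" using IH unfolding Q_def by blast
    have B3: "\<And>x y. x \<noteq> y \<Longrightarrow> poisson N (P x) (Q y) a b =
            1/2 * (Q x a b * Q y a b + (Q x a b * P y a b - P x a b * Q y a b) / (x - y))"
      using IH unfolding P_def Q_def by blast
    have B4: "\<And>x y. x \<noteq> y \<Longrightarrow> poisson N (Q x) (P y) a b =
            - (1/2 * (Q y a b * Q x a b + (Q y a b * P x a b - P y a b * Q x a b) / (y - x)))"
      using B3 poisson_antisym by metis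
    have B5: "\<And>y. poisson N B (P y) a b = 0" "\<And>y. poisson N B (Q y) a b = 0"
      unfolding B_def P_def Q_def by (rule pb_b_zero, simp add: Cp_low)+
    have B5': "\<And>y. poisson N (P y) B a b = 0" "\<And>y. poisson N (Q y) B a b = 0"
      using B5 poisson_antisym by (metis neg_equal_0_iff_equal)+
    have B6: "\<And>y. poisson N A (P y) a b = a s / 4 * Q y a b"
      unfolding A_def P_def Q_def
      by (subst pb_a) (use sN sn in \<open>auto simp: Cp_low Cp_db_top\<close>)
    have B6': "\<And>y. poisson N (P y) A a b = - (a s / 4 * Q y a b)"
      using B6 poisson_antisym by metis
    have B7: "\<And>y. poisson N A (Q y) a b = 0"
      unfolding A_def Q_def
      by (subst pb_a) (use sN sn in \<open>auto simp: Cp_low\<close>)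
    have B7': "\<And>y. poisson N (Q y) A a b = 0"
      using B7 poisson_antisym by (metis neg_equal_0_iff_equal)
    have B8: "poisson N B A a b = - a s / 4" unfolding A_def B_def by (rule pb_ba[OF sN(2) sN(1)])
    have B8': "poisson N A B a b = a s / 4" using B8 poisson_antisym by (metis minus_divide_left minus_minus)
    have AA: "poisson N A A a b = 0" "poisson N B B a b = 0" by (rule poisson_self)+
    have E1: "\<And>x G. poisson N (Cp n s x) G a b = (x - b s) * poisson N (P x) G a b
       + (- P x a b) * poisson N B G a b + (- 2 * a s * Q x a b) * poisson N A G a b
       + (-(a s * a s)) * poisson N (Q x) G a b"
      unfolding P_def Q_def A_def B_def
      by (rule poisson_lin1) (rule Cp_da_rec[OF sn], rule Cp_db_rec[OF sn])
    have E2: "\<And>y F. poisson N F (Cp n s y) a b = (y - b s) * poisson N F (P y) a b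
       + (- P y a b) * poisson N F B a b + (- 2 * a s * Q y a b) * poisson N F A a b
       + (-(a s * a s)) * poisson N F (Q y) a b"
      unfolding P_def Q_def A_def B_def
      by (rule poisson_lin2) (rule Cp_da_rec[OF sn], rule Cp_db_rec[OF sn])
    have V: "\<And>x. Cp n s x a b = (x - b s) * P x a b - a s * a s * Q x a b"
      unfolding P_def Q_def by (rule Cp_val[OF sn])
    have c1: "poisson N (Cp n s x) (Cp n s y) a b = 0"
    proof (cases "x = y")
      case True then show ?thesis by (simp add: poisson_self)
    next
      case False
      have "poisson N (Cp n s x) (Cp n s y) a b =
         (x - b s) * ((y - b s) * 0 + (- P y a b) * 0 + (- 2 * a s * Q y a b) * (- (a s / 4 * Q x a b))
            + (-(a s * a s)) * (1/2 * (Q x a b * Q y a b + (Q x a b * P y a b - P x a b * Q y a b) / (x - y))))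
       + (- P x a b) * ((y - b s) * 0 + (- P y a b) * 0 + (- 2 * a s * Q y a b) * (- a s / 4) + (-(a s * a s)) * 0)
       + (- 2 * a s * Q x a b) * ((y - b s) * (a s / 4 * Q y a b) + (- P y a b) * (a s / 4) + (- 2 * a s * Q y a b) * 0 + (-(a s * a s)) * 0)
       + (-(a s * a s)) * ((y - b s) * (- (1/2 * (Q y a b * Q x a b + (Q y a b * P x a b - P y a b * Q x a b) / (y - x))))
            + (- P y a b) * 0 + (- 2 * a s * Q y a b) * 0 + (-(a s * a s)) * 0)"
        by (unfold E1, unfold E2 B1 B2 B3[OF False] B4[OF False] B5 B5' B6 B6' B7 B7' B8 B8' AA, rule refl)
      also have "\<dots> = 0" by (rule alg_c1[OF False])
      finally show ?thesis .
    qed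
    have c2: "poisson N (Cp n (Suc s) x) (Cp n (Suc s) y) a b = 0" using IH by blast
    have c3: "x \<noteq> y \<Longrightarrow> poisson N (Cp n s x) (Cp n (Suc s) y) a b =
            1/2 * (Cp n (Suc s) x a b * Cp n (Suc s) y a b
              + (Cp n (Suc s) x a b * Cp n s y a b - Cp n s x a b * Cp n (Suc s) y a b) / (x - y))"
    proof -
      assume xy: "x \<noteq> y"
      have "poisson N (Cp n s x) (Cp n (Suc s) y) a b = poisson N (Cp n s x) (P y) a b" unfolding P_def ..
      also have "\<dots> = (x - b s) * 0 + (- P x a b) * 0 + (- 2 * a s * Q x a b) * (a s / 4 * Q y a b)
          + (-(a s * a s)) * (- (1/2 * (Q y a b * Q x a b + (Q y a b * P x a b - P y a b * Q x a b) / (y - x))))"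
        unfolding E1 B1 B4[OF xy] B5 B6 ..
      also have "\<dots> = 1/2 * (P x a b * P y a b + (P x a b * Cp n s y a b - Cp n s x a b * P y a b) / (x - y))"
        unfolding V by (rule alg_c3[OF xy])
      finally show ?thesis unfolding P_def .
    qed
    show ?thesis using c1 c2 c3 by blast
  qed
qed

lemma two_Suc: "(2::nat) = Suc 1" by simp

lemma mn_fun: "(\<lambda>a' b'. mn n a' b' y) = (\<lambda>a' b'. (- Cp n (Suc 1) y a' b') / Cp n 1 y a' b')"
  by (simp add: fun_eq_iff mn_def Pn_def Qn_def Cp_def two_Suc)

lemma dm_a: assumes "Cp n 1 y a b \<noteq> 0"
  shows "da (\<lambda>a' b'. mn n a' b' y) k a b = (-1 / Cp n 1 y a b) * da (Cp n (Suc 1) y) k a b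
     + (Cp n (Suc 1) y a b / (Cp n 1 y a b)^2) * da (Cp n 1 y) k a b
     + 0 * da (Cp n 1 y) k a b + 0 * da (Cp n 1 y) k a b"
proof -
  have "da (\<lambda>a' b'. mn n a' b' y) k a b =
     ((- da (Cp n (Suc 1) y) k a b) * Cp n 1 y a b - (- Cp n (Suc 1) y a b) * da (Cp n 1 y) k a b) / (Cp n 1 y a b * Cp n 1 y a b)"
    unfolding mn_fun
  proof (rule da_I)
    have s1: "smA (Cp n (Suc 1) y)" "smA (Cp n 1 y)" using sm_Cp by blast+
    have nz: "Cp n 1 y (a(k := a k)) b \<noteq> 0" using assms by simp
    show "((\<lambda>t. - Cp n (Suc 1) y (a(k := t)) b / Cp n 1 y (a(k := t)) b) has_real_derivative
      ((- da (Cp n (Suc 1) y) k a b) * Cp n 1 y a b - (- Cp n (Suc 1) y a b) * da (Cp n 1 y) k a b) / (Cp n 1 y a b * Cp n 1 y a b)) (at (a k))"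
      using DERIV_divide[OF DERIV_minus[OF smA_D[OF s1(1), of a k b]] smA_D[OF s1(2), of a k b] nz] by (simp only: fun_upd_triv)
  qed
  then show ?thesis by (simp only:) (rule alg3[OF assms])
qed

lemma dm_b: assumes "Cp n 1 y a b \<noteq> 0"
  shows "db (\<lambda>a' b'. mn n a' b' y) k a b = (-1 / Cp n 1 y a b) * db (Cp n (Suc 1) y) k a b
     + (Cp n (Suc 1) y a b / (Cp n 1 y a b)^2) * db (Cp n 1 y) k a b
     + 0 * db (Cp n 1 y) k a b + 0 * db (Cp n 1 y) k a b"
proof -
  have "db (\<lambda>a' b'. mn n a' b' y) k a b =
     ((- db (Cp n (Suc 1) y) k a b) * Cp n 1 y a b - (- Cp n (Suc 1) y a b) * db (Cp n 1 y) k a b) / (Cp n 1 y a b * Cp n 1 y a b)"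
    unfolding mn_fun
  proof (rule db_I)
    have s1: "smB (Cp n (Suc 1) y)" "smB (Cp n 1 y)" using sm_Cp by blast+
    have nz: "Cp n 1 y a (b(k := b k)) \<noteq> 0" using assms by simp
    show "((\<lambda>t. - Cp n (Suc 1) y a (b(k := t)) / Cp n 1 y a (b(k := t))) has_real_derivative
      ((- db (Cp n (Suc 1) y) k a b) * Cp n 1 y a b - (- Cp n (Suc 1) y a b) * db (Cp n 1 y) k a b) / (Cp n 1 y a b * Cp n 1 y a b)) (at (b k))"
      using DERIV_divide[OF DERIV_minus[OF smB_D[OF s1(1), of a b k]] smB_D[OF s1(2), of a b k] nz] by (simp only: fun_upd_triv)
  qed
  then show ?thesis by (simp only:) (rule alg3[OF assms])
qed

theorem theorem12p1:
  fixes N n :: nat and c x y :: real and a b :: "nat \<Rightarrow> real"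
  assumes "N \<ge> 1"
    and "\<And>k. 1 \<le> k \<Longrightarrow> k \<le> N - 1 \<Longrightarrow> a k > 0"
    and "(\<Sum>j=1..N. b j) = c"
    and "1 \<le> n" and "n \<le> N"
    and "Pn n a b y \<noteq> 0"
    and "x \<noteq> y"
  shows "(poisson N (\<lambda>a' b'. Pn n a' b' x) (\<lambda>a' b'. mn n a' b' y) a b
           = 1/2 * (Qn n a b x * mn n a b y
                    - (Pn n a b x * mn n a b y + Qn n a b x) / (x - y)))
     \<and> (poisson N (\<lambda>a' b'. Qn n a' b' x) (\<lambda>a' b'. mn n a' b' y) a b
           = 1/2 * (- Qn n a b x * (mn n a b y)^2
                    + mn n a b y * (Pn n a b x * mn n a b y + Qn n a b x) / (x - y)))"
proof -
  define P where "P = (\<lambda>x. Cp n 1 x)"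
  define Q where "Q = (\<lambda>x. Cp n (Suc 1) x)"
  have PnP: "\<And>x. (\<lambda>a' b'. Pn n a' b' x) = P x" "\<And>x a b. Pn n a b x = P x a b"
    by (simp_all add: P_def Cp_def Pn_def fun_eq_iff)
  have QnQ: "\<And>x. (\<lambda>a' b'. Qn n a' b' x) = Q x" "\<And>x a b. Qn n a b x = Q x a b"
    by (simp_all add: Q_def Cp_def Qn_def fun_eq_iff two_Suc)
  have mnv: "mn n a b y = - Q y a b / P y a b" by (simp add: mn_def PnP QnQ)
  have Py: "P y a b \<noteq> 0" using assms(6) PnP by simp
  have I: "\<And>x y. poisson N (P x) (P y) a b = 0 \<and> poisson N (Q x) (Q y) a b = 0 \<and>
         (x \<noteq> y \<longrightarrow> poisson N (P x) (Q y) a b =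
            1/2 * (Q x a b * Q y a b + (Q x a b * P y a b - P x a b * Q y a b) / (x - y)))"
    unfolding P_def Q_def by (rule inv_all) (use assms in auto)
  have L: "\<And>F. poisson N F (\<lambda>a' b'. mn n a' b' y) a b = (-1 / P y a b) * poisson N F (Q y) a b
     + (Q y a b / (P y a b)^2) * poisson N F (P y) a b + 0 * poisson N F (P y) a b + 0 * poisson N F (P y) a b"
    unfolding P_def Q_def by (rule poisson_lin2) (rule dm_a, use Py P_def in simp, rule dm_b, use Py P_def in simp)
  have r1: "poisson N (P x) (\<lambda>a' b'. mn n a' b' y) a b = 1/2 * (Q x a b * (- Q y a b / P y a b)
                    - (P x a b * (- Q y a b / P y a b) + Q x a b) / (x - y))"
  proof -
    have h: "poisson N (P x) (Q y) a b = 1/2 * (Q x a b * Q y a b + (Q x a b * P y a b - P x a b * Q y a b) / (x - y))"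
      "poisson N (P x) (P y) a b = 0" using I assms(7) by blast+
    show ?thesis unfolding L h by (rule alg1[OF Py assms(7)])
  qed
  have r2: "poisson N (Q x) (\<lambda>a' b'. mn n a' b' y) a b = 1/2 * (- Q x a b * (- Q y a b / P y a b)^2
                    + (- Q y a b / P y a b) * (P x a b * (- Q y a b / P y a b) + Q x a b) / (x - y))"
  proof -
    have yx: "y \<noteq> x" using assms(7) by simp
    have h1: "poisson N (Q x) (P y) a b = - poisson N (P y) (Q x) a b" by (rule poisson_antisym)
    have h2: "poisson N (P y) (Q x) a b = 1/2 * (Q y a b * Q x a b + (Q y a b * P x a b - P y a b * Q x a b) / (y - x))"
      using I[of y x] yx by blast
    have h: "poisson N (Q x) (P y) a b = - (1/2 * (Q y a b * Q x a b + (Q y a b * P x a b - P y a b * Q x a b) / (y - x)))"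
      "poisson N (Q x) (Q y) a b = 0" unfolding h1 h2 using I[of x y] by blast+
    show ?thesis unfolding L h by (rule alg2[OF Py assms(7)])
  qed
  show ?thesis unfolding PnP QnQ mnv by (rule conjI[OF r1 r2])
qed

end
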